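(* There exist $p\in(1,\infty)$ and $M<\infty$ such that for every menu $(R_\theta,p_\theta)_{\theta\in\Theta}$ that is individually rational and incentive compatible, the map $u:\Theta\to\mathbb R^2$, $u(\theta)=\big(U_\theta(R_\theta,p_\theta),\int_\Theta V_\vartheta(R_\vartheta,p_\vartheta)\,d\mu(\vartheta)\big)$, belongs to the Bochner space $L^p(\Theta,\mu;\mathbb R^2)$ and $\|u\|_{L^p}\le M$.
   Context: Setting (Yaari dual-utility insurance model). $(S,\Sigma,\mathbb P)$ is a probability space. Types: $\Theta=[\underline\theta,\bar\theta]$ with Borel $\sigma$-algebra and a probability measure $\mu$ with a Lebesgue density $q$. Fix $\bar L<\infty$. For each $\theta$ the type-$\theta$ agent faces a loss $L_\theta$ (bounded, $\Sigma$-measurable, values in $[0,\bar L]$) with continuous distribution function $F_\theta(l)=\mathbb P(L_\theta\le l)$. Retention functions: $\mathcal R=\{R:[0,\bar L]\to[0,\bar L]: R(0)=0,\ 0\le\partial R(l)/\partial l\le1\}$. A menu is a family $(R_\theta,p_\theta)_{\theta\in\Theta}$ with $R_\theta\in\mathcal R$, $p_\theta\in\mathbb R$. A distortion function is a nondecreasing $g:[0,1]\to[0,1]$ with $g(0)=0,g(1)=1$; type $\theta$ has distortion $g_\theta$, the insurer $g^{In}$. Utilities: $U_\theta(R,p)=-p-\int_0^{\bar L}[1-g_\theta(F_\theta(l))]\frac{\partial R(l)}{\partial l}dl$, $V_\theta(R,p)=p-\int_0^{\bar L}[1-g^{In}(F_\theta(l))](1-\frac{\partial R(l)}{\partial l})dl$,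 no-insurance utility $U_\theta(L_\theta,0)=-\int_0^{\bar L}[1-g_\theta(F_\theta(l))]dl$. Throughout, for every menu the maps $\theta\mapsto U_\theta(R_\theta,p_\theta)$, $\theta\mapsto V_\theta(R_\theta,p_\theta)$ lie in $L^1(\Theta,\mu)$. Individually rational: (P1) $U_\theta(R_\theta,p_\theta)\ge U_\theta(L_\theta,0)$ for all $\theta$ and (P2) $\int_\Theta V_\theta(R_\theta,p_\theta)d\mu\ge0$. Incentive compatible: $U_\theta(R_\theta,p_\theta)\ge U_\theta(R_{\theta'},p_{\theta'})$ for all $\theta,\theta'$. $L^p(\Theta,\mu;\mathbb R^2)$ is the Bochner space of strongly measurable $u$ with $\|u\|_{L^p}=(\int_\Theta\|u(\theta)\|^p d\mu)^{1/p}<\infty$, $\|\cdot\|$ the Euclidean norm. *)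

theory Defs
  imports "HOL-Probability.Probability"
begin

definition cdf :: "'a measure \<Rightarrow> ('a \<Rightarrow> real) \<Rightarrow> real \<Rightarrow> real" where
  "cdf P X l = measure P {s \<in> space P. X s \<le> l}"

definition distortion :: "(real \<Rightarrow> real) \<Rightarrow> bool" where
  "distortion g \<longleftrightarrow> mono_on {0..1} g \<and> g ` {0..1} \<subseteq> {0..1} \<and> g 0 = 0 \<and> g 1 = 1"

definition retention :: "real \<Rightarrow> (real \<Rightarrow> real) \<Rightarrow> bool" where
  "retention Lbar R \<longleftrightarrow> R 0 = 0 \<and> R ` {0..Lbar} \<subseteq> {0..Lbar} \<and>
     (\<forall>l\<in>{0..Lbar}. \<exists>d. (R has_real_derivative d) (at l within {0..Lbar}) \<and> 0 \<le> d \<and> d \<le> 1)"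

definition rderiv :: "real \<Rightarrow> (real \<Rightarrow> real) \<Rightarrow> real \<Rightarrow> real" where
  "rderiv Lbar R l = (SOME d. (R has_real_derivative d) (at l within {0..Lbar}))"

definition Uag :: "real \<Rightarrow> (real \<Rightarrow> real) \<Rightarrow> (real \<Rightarrow> real) \<Rightarrow> (real \<Rightarrow> real) \<Rightarrow> real \<Rightarrow> real" where
  "Uag Lbar g F R pr = - pr - (LINT l:{0..Lbar}|lborel. (1 - g (F l)) * rderiv Lbar R l)"

definition Vins :: "real \<Rightarrow> (real \<Rightarrow> real) \<Rightarrow> (real \<Rightarrow> real) \<Rightarrow> (real \<Rightarrow> real) \<Rightarrow> real \<Rightarrow> real" where
  "Vins Lbar gIn F R pr = pr - (LINT l:{0..Lbar}|lborel. (1 - gIn (F l)) * (1 - rderiv Lbar R l))"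

text \<open>No-insurance utility U_theta(L_theta,0).\<close>
definition Unone :: "real \<Rightarrow> (real \<Rightarrow> real) \<Rightarrow> (real \<Rightarrow> real) \<Rightarrow> real" where
  "Unone Lbar g F = - (LINT l:{0..Lbar}|lborel. 1 - g (F l))"

end

theory Submission imports Defs begin

lemma rderiv_bounds:
  assumes R: "retention Lbar R" and l: "l \<in> {0<..<Lbar}"
  shows "0 \<le> rderiv Lbar R l \<and> rderiv Lbar R l \<le> 1"
proof -
  from l have l': "l \<in> {0..Lbar}" and lt: "0 < Lbar" by auto
  from R l' obtain d where d: "(R has_real_derivative d) (at l within {0..Lbar})" "0 \<le> d" "d \<le> 1"
    unfolding retention_def by blast
  have ex: "(R has_real_derivative (rderiv Lbar R l)) (at l within {0..Lbar})"
    unfolding rderiv_def by (rule someI[of _ d]) (rule d(1))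
  have "rderiv Lbar R l = d"
    using vector_derivative_unique_within_closed_interval[of 0 Lbar l R "rderiv Lbar R l" d] lt l' ex d(1)
    by (simp add: has_real_derivative_iff_has_vector_derivative)
  with d show ?thesis by simp
qed

lemma int_bound:
  fixes h :: "real \<Rightarrow> real"
  assumes "\<And>l. l \<in> {0<..<Lbar} \<Longrightarrow> 0 \<le> h l \<and> h l \<le> 1" and L: "0 \<le> Lbar"
  shows "0 \<le> (LINT l:{0..Lbar}|lborel. h l) \<and> (LINT l:{0..Lbar}|lborel. h l) \<le> Lbar"
proof -
  have ae: "AE l in lborel. l \<noteq> 0 \<and> l \<noteq> Lbar"
    using AE_lborel_singleton[of 0] AE_lborel_singleton[of Lbar] by eventually_elim auto
  have ae1: "AE l in lborel. 0 \<le> indicator {0..Lbar} l *\<^sub>R h l"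
    using ae by eventually_elim (use assms in \<open>auto simp: indicator_def\<close>)
  have ae2: "AE l in lborel. indicator {0..Lbar} l *\<^sub>R h l \<le> indicator {0..Lbar} l"
    using ae by eventually_elim (use assms in \<open>auto simp: indicator_def\<close>)
  have 1: "0 \<le> (LINT l:{0..Lbar}|lborel. h l)"
    unfolding set_lebesgue_integral_def by (rule integral_nonneg_AE[OF ae1])
  have 2: "(LINT l:{0..Lbar}|lborel. h l) \<le> Lbar"
  proof (cases "integrable lborel (\<lambda>l. indicator {0..Lbar} l *\<^sub>R h l)")
    case True
    have "(LINT l:{0..Lbar}|lborel. h l) \<le> integral\<^sup>L lborel (indicator {0..Lbar} :: real \<Rightarrow> real)"
      unfolding set_lebesgue_integral_def
      by (rule integral_mono_AE[OF True _ ae2]) (use L in \<open>simp add: integrable_indicator_iff\<close>)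
    also have "\<dots> = Lbar" using L by simp
    finally show ?thesis .
  next
    case False
    then show ?thesis using L by (simp add: set_lebesgue_integral_def not_integrable_integral_eq)
  qed
  from 1 2 show ?thesis by simp
qed

theorem lemma1:
  fixes P :: "'a measure" and L :: "real \<Rightarrow> 'a \<Rightarrow> real" and Lbar :: real
    and tl tu :: real and q :: "real \<Rightarrow> real" and mu :: "real measure"
    and g :: "real \<Rightarrow> real \<Rightarrow> real" and gIn :: "real \<Rightarrow> real"
  assumes P: "prob_space P"
    and q_meas: "q \<in> borel_measurable lborel" and q_nonneg: "\<And>t. 0 \<le> q t"
    and mu_def: "mu = density (restrict_space lborel {tl..tu}) (\<lambda>t. ennreal (q t))"
    and mu_prob: "prob_space mu"
    and L_meas: "\<And>t. t \<in> {tl..tu} \<Longrightarrow> L t \<in> borel_measurable P"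
    and L_range: "\<And>t s. t \<in> {tl..tu} \<Longrightarrow> s \<in> space P \<Longrightarrow> L t s \<in> {0..Lbar}"
    and F_cont: "\<And>t. t \<in> {tl..tu} \<Longrightarrow> continuous_on UNIV (cdf P (L t))"
    and g_dist: "\<And>t. t \<in> {tl..tu} \<Longrightarrow> distortion (g t)"
    and gIn_dist: "distortion gIn"
  shows "\<exists>p M. 1 < p \<and>
    (\<forall>(R :: real \<Rightarrow> real \<Rightarrow> real) (pr :: real \<Rightarrow> real).
       (\<forall>t\<in>{tl..tu}. retention Lbar (R t))
       \<and> integrable mu (\<lambda>t. Uag Lbar (g t) (cdf P (L t)) (R t) (pr t))
       \<and> integrable mu (\<lambda>t. Vins Lbar gIn (cdf P (L t)) (R t) (pr t))
       \<and> (\<forall>t\<in>{tl..tu}. Uag Lbar (g t) (cdf P (L t)) (R t) (pr t) \<ge> Unone Lbar (g t) (cdf P (L t)))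
       \<and> (\<integral>t. Vins Lbar gIn (cdf P (L t)) (R t) (pr t) \<partial>mu) \<ge> 0
       \<and> (\<forall>t\<in>{tl..tu}. \<forall>t'\<in>{tl..tu}.
            Uag Lbar (g t) (cdf P (L t)) (R t) (pr t) \<ge> Uag Lbar (g t) (cdf P (L t)) (R t') (pr t'))
     \<longrightarrow> (let u = (\<lambda>t. (Uag Lbar (g t) (cdf P (L t)) (R t) (pr t),
                       \<integral>s. Vins Lbar gIn (cdf P (L s)) (R s) (pr s) \<partial>mu))
          in u \<in> borel_measurable mu
             \<and> integrable mu (\<lambda>t. norm (u t) powr p)
             \<and> (\<integral>t. norm (u t) powr p \<partial>mu) powr (1 / p) \<le> M))"
proof -
  define I where "I = {tl..tu}"
  have sp: "space mu = I" unfolding mu_def I_def by (simp add: space_restrict_space)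
  have Ine: "I \<noteq> {}" using prob_space.not_empty[OF mu_prob] sp by simp
  hence tlI: "tl \<in> I" unfolding I_def by auto
  obtain s0 where s0: "s0 \<in> space P" using prob_space.not_empty[OF P] by blast
  have L0: "0 \<le> Lbar" using L_range[OF tlI[unfolded I_def] s0] by simp
  have Fb: "0 \<le> cdf P X l \<and> cdf P X l \<le> 1" for X l
    unfolding cdf_def using prob_space.prob_le_1[OF P] by simp
  have gb: "0 \<le> g t (cdf P (L t) l) \<and> g t (cdf P (L t) l) \<le> 1" if "t \<in> I" for t l
    using g_dist[of t] that Fb[of "L t" l] unfolding distortion_def I_def by (auto simp: image_subset_iff)
  have gInb: "0 \<le> gIn (cdf P X l) \<and> gIn (cdf P X l) \<le> 1" for X l
    using gIn_dist Fb[of X l] unfolding distortion_def by (auto simp: image_subset_iff)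
  have Ab: "0 \<le> (LINT l:{0..Lbar}|lborel. (1 - g t (cdf P (L t) l)) * rderiv Lbar R l)
     \<and> (LINT l:{0..Lbar}|lborel. (1 - g t (cdf P (L t) l)) * rderiv Lbar R l) \<le> Lbar"
    if "t \<in> I" "retention Lbar R" for t R
  proof (rule int_bound[OF _ L0])
    fix l assume l: "l \<in> {0<..<Lbar}"
    show "0 \<le> (1 - g t (cdf P (L t) l)) * rderiv Lbar R l \<and> (1 - g t (cdf P (L t) l)) * rderiv Lbar R l \<le> 1"
      using rderiv_bounds[OF that(2) l] gb[OF that(1), of l] by (auto intro: mult_le_one)
  qed
  have Cb: "0 \<le> (LINT l:{0..Lbar}|lborel. (1 - gIn (cdf P X l)) * (1 - rderiv Lbar R l))
     \<and> (LINT l:{0..Lbar}|lborel. (1 - gIn (cdf P X l)) * (1 - rderiv Lbar R l)) \<le> Lbar"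
    if "retention Lbar R" for X R
  proof (rule int_bound[OF _ L0])
    fix l assume l: "l \<in> {0<..<Lbar}"
    show "0 \<le> (1 - gIn (cdf P X l)) * (1 - rderiv Lbar R l) \<and> (1 - gIn (cdf P X l)) * (1 - rderiv Lbar R l) \<le> 1"
      using rderiv_bounds[OF that l] gInb[of X l] by (auto intro: mult_le_one)
  qed
  have Bb: "Unone Lbar (g t) (cdf P (L t)) \<ge> - Lbar" if "t \<in> I" for t
    using int_bound[OF _ L0, of "\<lambda>l. 1 - g t (cdf P (L t) l)"] gb[OF that] unfolding Unone_def by auto
  show ?thesis
  proof (rule exI[of _ "2::real"], rule exI[of _ "5 * Lbar"], intro conjI allI impI)
    fix R :: "real \<Rightarrow> real \<Rightarrow> real" and pr :: "real \<Rightarrow> real"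
    assume H: "(\<forall>t\<in>{tl..tu}. retention Lbar (R t))
       \<and> integrable mu (\<lambda>t. Uag Lbar (g t) (cdf P (L t)) (R t) (pr t))
       \<and> integrable mu (\<lambda>t. Vins Lbar gIn (cdf P (L t)) (R t) (pr t))
       \<and> (\<forall>t\<in>{tl..tu}. Uag Lbar (g t) (cdf P (L t)) (R t) (pr t) \<ge> Unone Lbar (g t) (cdf P (L t)))
       \<and> (\<integral>t. Vins Lbar gIn (cdf P (L t)) (R t) (pr t) \<partial>mu) \<ge> 0
       \<and> (\<forall>t\<in>{tl..tu}. \<forall>t'\<in>{tl..tu}.
            Uag Lbar (g t) (cdf P (L t)) (R t) (pr t) \<ge> Uag Lbar (g t) (cdf P (L t)) (R t') (pr t'))"
    define U where "U t = Uag Lbar (g t) (cdf P (L t)) (R t) (pr t)" for t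
    define V where "V t = Vins Lbar gIn (cdf P (L t)) (R t) (pr t)" for t
    define W where "W = (\<integral>t. V t \<partial>mu)"
    have ret: "\<And>t. t \<in> I \<Longrightarrow> retention Lbar (R t)" using H unfolding I_def by blast
    have Uint: "integrable mu U" using H unfolding U_def by blast
    have Vint: "integrable mu V" using H unfolding V_def by blast
    have W0: "W \<ge> 0" using H unfolding W_def V_def by blast
    have IR0: "\<forall>t\<in>{tl..tu}. Uag Lbar (g t) (cdf P (L t)) (R t) (pr t) \<ge> Unone Lbar (g t) (cdf P (L t))"
      using H by blast
    have IR: "U t \<ge> - Lbar" if "t \<in> I" for t
    proof -
      have "U t \<ge> Unone Lbar (g t) (cdf P (L t))" using IR0 that unfolding U_def I_def by blast
      then show ?thesis using Bb[OF that] by linarith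
    qed
    have IC: "pr t \<le> pr t' + Lbar" if "t \<in> I" "t' \<in> I" for t t'
    proof -
      have "Uag Lbar (g t) (cdf P (L t)) (R t) (pr t) \<ge> Uag Lbar (g t) (cdf P (L t)) (R t') (pr t')"
        using H that unfolding I_def by blast
      then show ?thesis using Ab[OF that(1) ret[OF that(1)]] Ab[OF that(1) ret[OF that(2)]]
        unfolding Uag_def by linarith
    qed
    have prU: "pr t \<le> Lbar" if "t \<in> I" for t
      using IR[OF that] Ab[OF that ret[OF that]] L0 unfolding U_def Uag_def by linarith
    have Vle: "V t \<le> pr tl + Lbar" if "t \<in> I" for t
      using IC[OF that tlI] Cb[OF ret[OF that], of "L t"] unfolding V_def Vins_def by linarith
    have "W \<le> (\<integral>t. pr tl + Lbar \<partial>mu)"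
      unfolding W_def by (rule integral_mono_AE[OF Vint]) (auto intro!: AE_I2 finite_measure.integrable_const[OF prob_space.finite_measure[OF mu_prob]] simp: sp Vle)
    also have "\<dots> = pr tl + Lbar" using prob_space.prob_space[OF mu_prob] by simp
    finally have Wle: "W \<le> pr tl + Lbar" .
    have Ule: "U t \<le> 3 * Lbar" if "t \<in> I" for t
      using IC[OF tlI that] Wle W0 Ab[OF that ret[OF that]] unfolding U_def Uag_def by linarith
    have nb: "norm (U t, W) \<le> 5 * Lbar" if "t \<in> I" for t
    proof -
      have "norm (U t, W) \<le> norm (U t) + norm W" by (rule norm_Pair_le)
      also have "\<dots> \<le> 5 * Lbar" using Ule[OF that] IR[OF that] W0 Wle prU[OF tlI] by auto
      finally show ?thesis .
    qed
    have meas: "(\<lambda>t. (U t, W)) \<in> borel_measurable mu"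
      by (rule borel_measurable_Pair[OF borel_measurable_integrable[OF Uint]]) simp
    have meas2: "(\<lambda>t. norm (U t, W) powr 2) \<in> borel_measurable mu"
      by (intro powr_real_measurable measurable_compose[OF meas borel_measurable_norm]) simp_all
    have bnd: "norm (U t, W) powr 2 \<le> (5 * Lbar) powr 2" if "t \<in> I" for t
      using nb[OF that] by (intro powr_mono2) auto
    have bnd': "norm (norm (U t, W) powr 2) \<le> (5 * Lbar) powr 2" if "t \<in> space mu" for t
      using bnd[of t] that sp by simp
    have int2: "integrable mu (\<lambda>t. norm (U t, W) powr 2)"
      by (rule finite_measure.integrable_const_bound[OF prob_space.finite_measure[OF mu_prob], where B="(5 * Lbar) powr 2"])
         (rule AE_I2, use bnd' sp in blast, rule meas2)
    have "(\<integral>t. norm (U t, W) powr 2 \<partial>mu) \<le> (\<integral>t. (5 * Lbar) powr 2 \<partial>mu)"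
      by (rule integral_mono_AE[OF int2]) (rule finite_measure.integrable_const[OF prob_space.finite_measure[OF mu_prob]], rule AE_I2, use bnd sp in blast)
    also have "\<dots> = (5 * Lbar) powr 2" using prob_space.prob_space[OF mu_prob] by simp
    finally have ile: "(\<integral>t. norm (U t, W) powr 2 \<partial>mu) \<le> (5 * Lbar) powr 2" .
    have "(\<integral>t. norm (U t, W) powr 2 \<partial>mu) powr (1/2) \<le> ((5 * Lbar) powr 2) powr (1/2)"
      by (rule powr_mono2) (use ile in \<open>auto intro: integral_nonneg_AE\<close>)
    also have "\<dots> = 5 * Lbar" using L0 by (subst powr_powr) simp
    finally have fin: "(\<integral>t. norm (U t, W) powr 2 \<partial>mu) powr (1/2) \<le> 5 * Lbar" .
    show "let u = (\<lambda>t. (Uag Lbar (g t) (cdf P (L t)) (R t) (pr t),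
                       \<integral>s. Vins Lbar gIn (cdf P (L s)) (R s) (pr s) \<partial>mu))
          in u \<in> borel_measurable mu
             \<and> integrable mu (\<lambda>t. norm (u t) powr 2)
             \<and> (\<integral>t. norm (u t) powr 2 \<partial>mu) powr (1 / 2) \<le> 5 * Lbar"
      using meas int2 fin unfolding Let_def U_def[symmetric] V_def[symmetric] W_def[symmetric] by simp
  qed simp
qed

end
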